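(* Let $\alpha,\beta>0$ with $\beta>\alpha$, and let $S_0,I_0$ satisfy $S_0>I_0>0$, $S_0+I_0=1$ and $S_0>\alpha/\beta$. Let $(S(t),I(t),R(t))$ be the solution of $$\dot S=-\frac{\beta SI}{S+I},\qquad \dot I=\frac{\beta SI}{S+I}-\alpha I,\qquad \dot R=\alpha I$$ with $S(0)=S_0$, $I(0)=I_0$, $R(0)=0$. Then any two of the curves $S(t)$, $I(t)$, $R(t)$ (for $t>0$) intersect exactly once. Furthermore, letting $t_{\mathrm{peak}}>0$ denote the time at which $I(t)$ attains its maximum: (i) the curves $S(t)$ and $I(t)$ intersect before $t_{\mathrm{peak}}$ if $\beta>2\alpha$, exactly at $t_{\mathrm{peak}}$ if $\beta=2\alpha$, and after $t_{\mathrm{peak}}$ if $\beta<2\alpha$; (ii) the three curves $S(t)$, $I(t)$, $R(t)$ intersect in a common point if and only if $\frac{\beta}{\alpha}<\frac{\log 3}{\log 3-\log 2}$ and $S_0=\frac13\left(\frac32\right)^{\beta/\alpha}$; (iii) the three curves intersect in a common point located at $t=t_{\mathrm{peak}}$ if and only if $\beta=2\alpha$ and $S_0=\frac34$.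
   Context: Modified SIR epidemiological model with recovery rate $\alpha$ and transmission rate $\beta$; $S,I,R$ are fractions of susceptible, infective and removed individuals, with total population $S+I+R=1$. *)

theory Defs
  imports Complex_Main
begin

end

theory Submission
  imports Defs "HOL-Analysis.Analysis"
begin

lemma deriv_g: "n > 0 \<Longrightarrow> ((\<lambda>n. a * n - S0 * n powr k - b) has_real_derivative (a - S0 * (k * n powr (k - 1)))) (at n)"
  by (rule derivative_eq_intros refl | simp)+

lemma mvt_g:
  fixes a b c d S0 k :: real
  assumes "0 < a" "a < b"
  shows "\<exists>z. a < z \<and> z < b \<and> (c * b - S0 * b powr k - d) - (c * a - S0 * a powr k - d)
     = (b - a) * (c - S0 * (k * z powr (k - 1)))"
proof (rule MVT2[of a b "\<lambda>n. c * n - S0 * n powr k - d"])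
  fix x assume "a \<le> x" "x \<le> b"
  hence "x > 0" using assms by linarith
  thus "DERIV (\<lambda>n. c * n - S0 * n powr k - d) x :> c - S0 * (k * x powr (k - 1))" by (rule deriv_g)
qed (use assms in linarith)

lemma concave_root:
  fixes k S0 n1 n2 :: real
  assumes "k > 1" "0 < S0" "S0 < 1" "0 < n2" "n2 < n1" "n1 < 1"
    and g1: "2*n1 - S0*n1 powr k - 1 = 0" and g2: "2*n2 - S0*n2 powr k - 1 = 0"
  shows False
proof -
  let ?g = "\<lambda>n. 2 * n - S0 * n powr k - 1"
  let ?g' = "\<lambda>n. 2 - S0 * (k * n powr (k - 1))"
  obtain z where z: "n2 < z" "z < n1" "?g n1 - ?g n2 = (n1 - n2) * ?g' z"
    using mvt_g[of n2 n1 2 S0 k 1] assms by auto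
  obtain z' where z': "n1 < z'" "z' < 1" "?g 1 - ?g n1 = (1 - n1) * ?g' z'"
    using mvt_g[of n1 1 2 S0 k 1] assms by auto
  have "?g' z = 0" using z g1 g2 assms by simp
  moreover have zz: "z powr (k - 1) < z' powr (k - 1)"
    using powr_less_mono2[of "k-1" z z'] z z' assms by simp
  moreover have sk: "S0 * k > 0" using assms by simp
  ultimately have "S0 * k * (z powr (k - 1)) < S0 * k * (z' powr (k - 1))"
    using mult_strict_left_mono[OF zz sk] by simp
  hence "?g' z' < 0" using \<open>?g' z = 0\<close> by (simp add: algebra_simps)
  hence "(1 - n1) * ?g' z' < 0" using assms by (simp add: mult_pos_neg)
  hence "?g 1 < 0" using z' g1 by simp
  thus False using assms by simp
qed

lemma hmax:
  fixes k S0 n np :: real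
  assumes "k > 1" "0 < S0" "np > 0" "k * S0 * np powr (k - 1) = 1" "n > 0" "n \<noteq> np"
  shows "n - S0 * n powr k < np - S0 * np powr k"
proof -
  let ?h = "\<lambda>n. 1 * n - S0 * n powr k - 0"
  let ?h' = "\<lambda>n. 1 - S0 * (k * n powr (k - 1))"
  show ?thesis
  proof (cases "n < np")
    case True
    obtain z where z: "n < z" "z < np" "?h np - ?h n = (np - n) * ?h' z"
      using mvt_g[of n np 1 S0 k 0] assms True by auto
    have "z powr (k - 1) < np powr (k - 1)"
      using powr_less_mono2[of "k-1" z np] z assms by simp
    hence "S0 * (k * z powr (k - 1)) < S0 * (k * np powr (k - 1))" using assms by simp
    hence "?h' z > 0" using assms(4) by (simp add: algebra_simps)
    hence "(np - n) * ?h' z > 0" using True by simp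
    thus ?thesis using z by simp
  next
    case False
    hence F: "np < n" using assms(6) by simp
    obtain z where z: "np < z" "z < n" "?h n - ?h np = (n - np) * ?h' z"
      using mvt_g[of np n 1 S0 k 0] assms F by auto
    have "np powr (k - 1) < z powr (k - 1)"
      using powr_less_mono2[of "k-1" np z] z assms by simp
    hence "S0 * (k * np powr (k - 1)) < S0 * (k * z powr (k - 1))" using assms by simp
    hence "?h' z < 0" using assms(4) by (simp add: algebra_simps)
    hence "(n - np) * ?h' z < 0" using F by (simp add: mult_pos_neg)
    thus ?thesis using z by simp
  qed
qed

lemma part1:
  fixes \<alpha> \<beta> S0 I0 :: real and S I R :: "real \<Rightarrow> real"
  assumes "\<alpha> > 0" and "\<beta> > \<alpha>"
    and "S0 > I0" and "I0 > 0" and "S0 + I0 = 1" and "S0 > \<alpha> / \<beta>"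
    and "S 0 = S0" and "I 0 = I0" and "R 0 = 0"
    and dS: "\<And>t. t \<ge> 0 \<Longrightarrow>
       (S has_real_derivative (- \<beta> * S t * I t / (S t + I t))) (at t within {0..})"
    and dI: "\<And>t. t \<ge> 0 \<Longrightarrow>
       (I has_real_derivative (\<beta> * S t * I t / (S t + I t) - \<alpha> * I t)) (at t within {0..})"
    and dR: "\<And>t. t \<ge> 0 \<Longrightarrow>
       (R has_real_derivative (\<alpha> * I t)) (at t within {0..})"
  shows "(\<forall>t\<ge>0. S t > 0 \<and> I t > 0 \<and> R t = 1 - (S t + I t) \<and> S t + I t \<le> 1 \<and>
           S t = S0 * (S t + I t) powr (\<beta>/\<alpha>))
     \<and> continuous_on {0..} S \<and> continuous_on {0..} I \<and> continuous_on {0..} R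
     \<and> (\<forall>t1 t2. 0 \<le> t1 \<and> t1 < t2 \<longrightarrow> S t2 + I t2 < S t1 + I t1)
     \<and> (\<forall>e>0. \<exists>t\<ge>0. S t + I t < e)"
proof -
  define k where "k = \<beta> / \<alpha>"
  have k1: "k > 1" using assms(1,2) by (simp add: k_def)
  have bk: "\<beta> = k * \<alpha>" using assms(1) by (simp add: k_def)
  define N where "N = (\<lambda>t. S t + I t)"
  have int: "\<And>t::real. t > 0 \<Longrightarrow> at t within {0..} = at t"
    by (rule at_within_interior) (simp add: interior_real_atLeast)
  have dS': "\<And>t. t > 0 \<Longrightarrow> (S has_real_derivative (- \<beta> * S t * I t / (S t + I t))) (at t)"
    using dS int by (metis less_imp_le)
  have dI': "\<And>t. t > 0 \<Longrightarrow> (I has_real_derivative (\<beta> * S t * I t / (S t + I t) - \<alpha> * I t)) (at t)"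
    using dI int by (metis less_imp_le)
  have dR': "\<And>t. t > 0 \<Longrightarrow> (R has_real_derivative (\<alpha> * I t)) (at t)"
    using dR int by (metis less_imp_le)
  have dN': "\<And>t. t > 0 \<Longrightarrow> (N has_real_derivative (- \<alpha> * I t)) (at t)"
    unfolding N_def by (rule DERIV_cong[OF DERIV_add[OF dS' dI']]) (auto simp: algebra_simps)
  have cS: "continuous_on {0..} S" by (rule DERIV_continuous_on[OF dS]) simp
  have cI: "continuous_on {0..} I" by (rule DERIV_continuous_on[OF dI]) simp
  have cR: "continuous_on {0..} R" by (rule DERIV_continuous_on[OF dR]) simp
  have cN: "continuous_on {0..} N" unfolding N_def by (intro continuous_intros cS cI)
  have cons: "\<forall>t\<in>{0..}. S t + I t + R t = 1"
  proof -
    have "\<exists>c. \<forall>t\<in>{0..}. S t + I t + R t = c"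
      apply (rule has_field_derivative_zero_constant)
       apply simp
      apply (rule DERIV_cong[OF DERIV_add[OF DERIV_add[OF dS dI] dR]])
      by (auto simp: algebra_simps)
    then obtain c where c: "\<forall>t\<in>{0..}. S t + I t + R t = c" by blast
    have "c = 1" using c[rule_format, of 0] assms by simp
    then show ?thesis using c by simp
  qed
  have RN: "\<And>t. t \<ge> 0 \<Longrightarrow> R t = 1 - N t" using cons unfolding N_def by force
  have key: "R T \<ge> 0 \<and> N T > 0 \<and> S T = S0 * N T powr k"
    if T0: "T > 0" and posT: "\<forall>u. 0 \<le> u \<and> u < T \<longrightarrow> S u > 0 \<and> I u > 0" for T
  proof -
    have "R 0 \<le> R T"
    proof (rule DERIV_nonneg_imp_increasing_open[of 0 T R])
      show "continuous_on {0..T} R" using cR by (rule continuous_on_subset) auto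
      fix x assume "0 < x" "x < T"
      then have "I x > 0" using posT by auto
      then show "\<exists>y. (R has_real_derivative y) (at x) \<and> 0 \<le> y"
        using dR' \<open>0 < x\<close> assms(1) by (intro exI[of _ "\<alpha> * I x"]) auto
    qed (use T0 in auto)
    hence R0: "R T \<ge> 0" using assms(1-9) by simp
    have "N 0 * exp (\<alpha> * 0) \<le> N T * exp (\<alpha> * T)"
    proof (rule DERIV_nonneg_imp_increasing_open[of 0 T "\<lambda>t. N t * exp (\<alpha> * t)"])
      show "continuous_on {0..T} (\<lambda>t. N t * exp (\<alpha> * t))"
        by (intro continuous_intros continuous_on_subset[OF cN]) auto
      fix x assume x: "0 < x" "x < T"
      have "((\<lambda>t. N t * exp (\<alpha> * t)) has_real_derivative
              (- \<alpha> * I x) * exp (\<alpha> * x) + N x * (exp (\<alpha> * x) * \<alpha>)) (at x)"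
        by (rule derivative_eq_intros dN' x | simp)+
      moreover have "(- \<alpha> * I x) * exp (\<alpha> * x) + N x * (exp (\<alpha> * x) * \<alpha>) = \<alpha> * S x * exp (\<alpha> * x)"
        by (simp add: N_def algebra_simps)
      moreover have "S x > 0" using posT x by auto
      hence "\<alpha> * S x * exp (\<alpha> * x) \<ge> 0" using assms(1) by simp
      ultimately show "\<exists>y. ((\<lambda>t. N t * exp (\<alpha> * t)) has_real_derivative y) (at x) \<and> 0 \<le> y"
        by metis
    qed (use T0 in auto)
    hence "1 \<le> N T * exp (\<alpha> * T)" using assms(1-9) by (simp add: N_def)
    hence NT: "N T > 0" by (smt (verit) exp_gt_zero mult_nonpos_nonneg)
    have Npos: "\<And>u. 0 \<le> u \<Longrightarrow> u \<le> T \<Longrightarrow> N u > 0"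
      using posT NT N_def by (metis add_pos_pos le_less)
    define H where "H = (\<lambda>t. S t * N t powr (- k))"
    have "H 0 \<le> H T \<and> H T \<le> H 0"
    proof
      have cH: "continuous_on {0..T} H" unfolding H_def
        by (intro continuous_intros continuous_on_subset[OF cN] continuous_on_subset[OF cS])
           (use Npos in force)+
      have dH: "(H has_real_derivative 0) (at x)" if x: "0 < x" "x < T" for x
      proof -
        have Nx: "N x > 0" using Npos x by simp
        have "(H has_real_derivative
          (- \<beta> * S x * I x / (S x + I x)) * N x powr (-k) + S x * ((- k) * N x powr (- k - 1) * (- \<alpha> * I x))) (at x)"
          unfolding H_def
          by (rule derivative_eq_intros dS' dN' x refl Nx | simp)+
        moreover have "(- \<beta> * S x * I x / (S x + I x)) * N x powr (-k) + S x * ((- k) * N x powr (- k - 1) * (- \<alpha> * I x)) = 0"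
        proof -
          have "N x powr (- k - 1) = N x powr (-k) / N x" using Nx by (simp add: powr_diff)
          thus ?thesis using Nx by (simp add: N_def bk field_simps)
        qed
        ultimately show ?thesis by simp
      qed
      show "H 0 \<le> H T"
        by (rule DERIV_nonneg_imp_increasing_open[of 0 T H, OF _ _ cH]) (use T0 dH in auto)
      show "H T \<le> H 0"
        by (rule DERIV_nonpos_imp_decreasing_open[of 0 T H, OF _ _ cH]) (use T0 dH in auto)
    qed
    hence "H T = S0" using assms(1-9) by (simp add: H_def N_def)
    hence "S T = S0 * N T powr k" using NT by (simp add: H_def powr_minus field_simps)
    thus ?thesis using R0 NT by simp
  qed
  have pos: "\<forall>t\<ge>0. S t > 0 \<and> I t > 0"
  proof (rule ccontr)
    assume neg: "\<not> ?thesis"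
    define P where "P = {0..} \<inter> (\<lambda>t. min (S t) (I t)) -` {..0}"
    have Pne: "P \<noteq> {}" using neg by (auto simp: P_def min_le_iff_disj not_less)
    have cP: "closed P" unfolding P_def
      by (rule continuous_closed_preimage) (intro continuous_intros cS cI, auto)
    have bP: "bdd_below P" unfolding P_def by (rule bdd_belowI[of _ 0]) auto
    define T where "T = Inf P"
    have TP: "T \<in> P" using closed_contains_Inf[OF Pne bP cP] T_def by simp
    have T0: "T \<ge> 0" using TP P_def by auto
    have below: "\<forall>u. 0 \<le> u \<and> u < T \<longrightarrow> S u > 0 \<and> I u > 0"
    proof (intro allI impI)
      fix u assume u: "0 \<le> u \<and> u < T"
      show "S u > 0 \<and> I u > 0"
      proof (rule ccontr)
        assume "\<not> (S u > 0 \<and> I u > 0)"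
        hence "u \<in> P" using u by (auto simp: P_def min_le_iff_disj not_less)
        hence "T \<le> u" unfolding T_def by (rule cInf_lower[OF _ bP])
        thus False using u by simp
      qed
    qed
    have "T \<noteq> 0" using TP assms(1-9) by (auto simp: P_def)
    hence "T > 0" using T0 by simp
    from key[OF this below] have k3: "S T = S0 * N T powr k" "N T > 0" "R T \<ge> 0" by auto
    have N1: "N T \<le> 1" using RN[OF T0] k3 by simp
    have S0p: "S0 > 0" "S0 < 1" using assms(1-9) by auto
    have "S T > 0" using k3 S0p by simp
    have p1: "N T powr (k - 1) \<le> 1"
      using powr_mono2[of "k-1" "N T" 1] k1 k3 N1 by simp
    have p2: "S0 * N T powr (k - 1) \<le> S0 * 1"
      by (rule mult_left_mono) (use p1 S0p in auto)
    have p3: "S0 * N T powr (k - 1) < 1" using p2 S0p by linarith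
    have p4: "N T * (S0 * N T powr (k - 1)) < N T" using k3 p3 by simp
    have p5: "N T powr k = N T * N T powr (k - 1)"
      using powr_add[of "N T" 1 "k-1"] k3 by simp
    have p6: "I T = N T - S T" by (simp add: N_def)
    have p7: "S T = N T * (S0 * N T powr (k - 1))" using k3(1) p5 by (simp only: mult.left_commute)
    have "I T > 0" using p4 p6 p7 by linarith
    with \<open>S T > 0\<close> TP show False by (auto simp: P_def)
  qed
  have inv: "S t = S0 * N t powr k" "N t > 0" "N t \<le> 1" if "t \<ge> 0" for t
  proof -
    have "S t = S0 * N t powr k \<and> N t > 0 \<and> N t \<le> 1"
    proof (cases "t = 0")
      case True thus ?thesis using assms(1-9) by (simp add: N_def)
    next
      case False
      hence "t > 0" using that by simp
      from key[OF this] pos RN[OF that] show ?thesis by auto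
    qed
    thus "S t = S0 * N t powr k" "N t > 0" "N t \<le> 1" by auto
  qed
  have dec: "N t2 < N t1" if "0 \<le> t1" "t1 < t2" for t1 t2
  proof (rule DERIV_neg_imp_decreasing_open[of t1 t2 N])
    show "continuous_on {t1..t2} N" using cN by (rule continuous_on_subset) (use that in auto)
    fix x assume x: "t1 < x" "x < t2"
    hence "x > 0" using that by simp
    with pos have "I x > 0" by auto
    then show "\<exists>y. (N has_real_derivative y) (at x) \<and> y < 0"
      using dN' \<open>x > 0\<close> assms(1) by (intro exI[of _ "- \<alpha> * I x"]) auto
  qed (use that in auto)
  define c where "c = \<alpha> * (1 - S0)"
  have c0: "c > 0" using assms(1-9) by (simp add: c_def)
  have small: "N t * exp (c * t) \<le> 1" if "t \<ge> 0" for t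
  proof -
    have "N t * exp (c * t) \<le> N 0 * exp (c * 0)"
    proof (rule DERIV_nonpos_imp_decreasing_open[of 0 t "\<lambda>t. N t * exp (c * t)"])
      show "continuous_on {0..t} (\<lambda>t. N t * exp (c * t))"
        by (intro continuous_intros continuous_on_subset[OF cN]) auto
      fix x assume x: "0 < x" "x < t"
      have "((\<lambda>t. N t * exp (c * t)) has_real_derivative
              (- \<alpha> * I x) * exp (c * x) + N x * (exp (c * x) * c)) (at x)"
        by (rule derivative_eq_intros dN' x | simp)+
      moreover have "(- \<alpha> * I x) * exp (c * x) + N x * (exp (c * x) * c) \<le> 0"
      proof -
        have Nx: "N x > 0" "N x \<le> 1" "S x = S0 * N x powr k" using inv x by auto
        have "N x powr k \<le> N x" using powr_le_one_le[of "N x" k] Nx k1 by simp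
        hence "S x \<le> S0 * N x" using Nx assms(1-9) by simp
        have e1: "- \<alpha> * I x + N x * c = \<alpha> * (S x - S0 * N x)"
          by (simp add: c_def N_def algebra_simps)
        have "\<alpha> * (S x - S0 * N x) \<le> 0" using \<open>S x \<le> S0 * N x\<close> assms(1)
          by (simp add: mult_nonneg_nonpos)
        hence "- \<alpha> * I x + N x * c \<le> 0" using e1 by simp
        hence "exp (c * x) * (- \<alpha> * I x + N x * c) \<le> 0"
          by (simp add: mult_nonneg_nonpos)
        thus ?thesis by (simp add: algebra_simps)
      qed
      ultimately show "\<exists>y. ((\<lambda>t. N t * exp (c * t)) has_real_derivative y) (at x) \<and> y \<le> 0"
        by metis
    qed (use that in auto)
    thus ?thesis using assms(1-9) by (simp add: N_def)
  qed
  have small2: "\<exists>t\<ge>0. N t < e" if "e > 0" for e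
  proof -
    define t where "t = \<bar>ln e\<bar> / c + 1"
    have t0: "t \<ge> 0" using c0 by (simp add: t_def)
    have "c * t = \<bar>ln e\<bar> + c" using c0 by (simp add: t_def field_simps)
    moreover have "\<bar>ln e\<bar> \<ge> - ln e" by simp
    ultimately have "c * t > - ln e" using c0 by linarith
    hence "exp (c * t) > exp (- ln e)" by simp
    hence "exp (c * t) > 1 / e" using that by (simp add: exp_minus exp_ln inverse_eq_divide)
    hence "e * exp (c * t) > 1" using that by (simp add: field_simps)
    moreover have "N t * exp (c * t) \<le> 1" using small t0 .
    ultimately have "N t * exp (c * t) < e * exp (c * t)" by linarith
    hence "N t < e" by (simp add: mult_less_cancel_right)
    thus ?thesis using t0 by blast
  qed
  show ?thesis
  proof (intro conjI cS cI cR)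
    show "\<forall>t\<ge>0. S t > 0 \<and> I t > 0 \<and> R t = 1 - (S t + I t) \<and> S t + I t \<le> 1 \<and>
           S t = S0 * (S t + I t) powr (\<beta>/\<alpha>)"
    proof (intro allI impI)
      fix t :: real assume t: "t \<ge> 0"
      show "S t > 0 \<and> I t > 0 \<and> R t = 1 - (S t + I t) \<and> S t + I t \<le> 1 \<and>
           S t = S0 * (S t + I t) powr (\<beta>/\<alpha>)"
        using pos t inv[OF t] RN[OF t] unfolding N_def k_def by simp
    qed
    show "\<forall>t1 t2. 0 \<le> t1 \<and> t1 < t2 \<longrightarrow> S t2 + I t2 < S t1 + I t1"
      using dec unfolding N_def by blast
    show "\<forall>e>0. \<exists>t\<ge>0. S t + I t < e"
      using small2 unfolding N_def by blast
  qed
qed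

lemma part2:
  fixes \<alpha> \<beta> S0 I0 :: real and S I R :: "real \<Rightarrow> real"
  assumes a1: "\<alpha> > 0" and a2: "\<beta> > \<alpha>"
    and a3: "S0 > I0" and a4: "I0 > 0" and a5: "S0 + I0 = 1" and a6: "S0 > \<alpha> / \<beta>"
    and a7: "S 0 = S0" and a8: "I 0 = I0" and a9: "R 0 = 0"
    and H1: "\<forall>t\<ge>0. S t > 0 \<and> I t > 0 \<and> R t = 1 - (S t + I t) \<and> S t + I t \<le> 1 \<and>
           S t = S0 * (S t + I t) powr (\<beta>/\<alpha>)"
    and cS: "continuous_on {0..} S" and cI: "continuous_on {0..} I" and cR: "continuous_on {0..} R"
    and H2: "\<forall>t1 t2. 0 \<le> t1 \<and> t1 < t2 \<longrightarrow> S t2 + I t2 < S t1 + I t1"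
    and H3: "\<forall>e>0. \<exists>t\<ge>0. S t + I t < e"
  shows "(\<exists>!t. t > 0 \<and> S t = I t)
    \<and> (\<exists>!t. t > 0 \<and> S t = R t)
    \<and> (\<exists>!t. t > 0 \<and> I t = R t)
    \<and> (\<exists>tp > 0. \<forall>t \<ge> 0. I t \<le> I tp)
    \<and> (\<forall>tp. tp > 0 \<and> (\<forall>t \<ge> 0. I t \<le> I tp) \<longrightarrow>
         (\<forall>ts. ts > 0 \<and> S ts = I ts \<longrightarrow>
             (\<beta> > 2 * \<alpha> \<longrightarrow> ts < tp)
           \<and> (\<beta> = 2 * \<alpha> \<longrightarrow> ts = tp)
           \<and> (\<beta> < 2 * \<alpha> \<longrightarrow> ts > tp))
       \<and> ((S tp = I tp \<and> I tp = R tp) \<longleftrightarrow> (\<beta> = 2 * \<alpha> \<and> S0 = 3 / 4)))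
    \<and> ((\<exists>t > 0. S t = I t \<and> I t = R t) \<longleftrightarrow>
         (\<beta> / \<alpha> < ln 3 / (ln 3 - ln 2) \<and> S0 = (1 / 3) * (3 / 2) powr (\<beta> / \<alpha>)))"
proof -
  define k where "k = \<beta> / \<alpha>"
  have k1: "k > 1" using a1 a2 by (simp add: k_def)
  have kS0: "k * S0 > 1" using a6 a1 a2 by (simp add: k_def field_simps)
  have S0p: "S0 > 0" "S0 < 1" "S0 > 1/2" using a3 a4 a5 by auto
  define N where "N = (\<lambda>t. S t + I t)"
  have N0: "N 0 = 1" using a5 a7 a8 by (simp add: N_def)
  have Spos: "S t > 0" and Ipos: "I t > 0" and RN: "R t = 1 - N t" and N1: "N t \<le> 1"
    and Sinv: "S t = S0 * N t powr k" and IN: "I t = N t - S t" and Npos: "N t > 0"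
    if "t \<ge> 0" for t
    using H1 that unfolding N_def k_def by auto
  have dec: "N t2 < N t1" if "0 \<le> t1" "t1 < t2" for t1 t2 using H2 that unfolding N_def by blast
  have decle: "N t2 \<le> N t1" if "0 \<le> t1" "t1 \<le> t2" for t1 t2
    using dec[of t1 t2] that by (cases "t1 = t2") auto
  have Nlt1: "N t < 1" if "t > 0" for t using dec[of 0 t] that N0 by simp
  have Ninj: "t1 = t2" if "0 \<le> t1" "0 \<le> t2" "N t1 = N t2" for t1 t2
    using dec[of t1 t2] dec[of t2 t1] that by (cases t1 t2 rule: linorder_cases) auto
  have cN: "continuous_on {0..} N" unfolding N_def by (intro continuous_intros cS cI)
  have hit: "\<exists>t>0. N t = v" if vv: "0 < v" "v < 1" for v
  proof -
    obtain t1 where t1a: "t1 \<ge> 0" "S t1 + I t1 < v" using H3[rule_format, OF vv(1)] by blast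
    have t1: "t1 \<ge> 0" "N t1 < v" using t1a by (auto simp: N_def)
    have c01: "continuous_on {0..t1} N" by (rule continuous_on_subset[OF cN]) auto
    have "N t1 \<le> v" "v \<le> N 0" using t1 N0 vv by auto
    from IVT2'[of N t1 v 0, OF this t1(1) c01]
    have "\<exists>x. 0 \<le> x \<and> x \<le> t1 \<and> N x = v" .
    then obtain x where x: "0 \<le> x" "N x = v" by blast
    have "x \<noteq> 0" using x N0 vv by auto
    hence "x > 0" using x by simp
    thus ?thesis using x(2) by (intro exI[of _ x]) simp
  qed
  define pw where "pw = (\<lambda>t. N t powr (k - 1))"
  have pk: "N t powr k = N t * pw t" if "t \<ge> 0" for t
    using powr_add[of "N t" 1 "k-1"] Npos[OF that] by (simp add: pw_def)
  have pwdec: "pw t2 < pw t1" if "0 \<le> t1" "t1 < t2" for t1 t2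
    unfolding pw_def using powr_less_mono2[of "k-1" "N t2" "N t1"] dec[OF that] Npos[of t2] that k1 by simp
  have pwle: "pw t2 \<le> pw t1" if "0 \<le> t1" "t1 \<le> t2" for t1 t2
    using pwdec[of t1 t2] that by (cases "t1 = t2") auto
  have pwinj: "t1 = t2" if "0 \<le> t1" "0 \<le> t2" "pw t1 = pw t2" for t1 t2
    using pwdec[of t1 t2] pwdec[of t2 t1] that by (cases t1 t2 rule: linorder_cases) auto
  have Sform: "S t = N t * (S0 * pw t)" if "t \<ge> 0" for t
    using Sinv[OF that] pk[OF that] by simp
  have eqSI: "S t = I t \<longleftrightarrow> 2 * S0 * pw t = 1" if "t \<ge> 0" for t
  proof -
    have e1: "S t = I t \<longleftrightarrow> 2 * S t = N t"
      by (rule iffI) (use IN[OF that] in linarith)+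
    have e2: "2 * S t = N t * (2 * S0 * pw t)" by (simp add: Sform[OF that] algebra_simps)
    have "S t = I t \<longleftrightarrow> N t * (2 * S0 * pw t) = N t * 1"
      using e1 e2 by simp
    also have "\<dots> \<longleftrightarrow> 2 * S0 * pw t = 1" using Npos[OF that] by simp
    finally show ?thesis .
  qed
  have a1': "\<alpha> \<noteq> 0" using a1 by simp
  have kb: "\<beta> = k * \<alpha>" using a1 by (simp add: k_def)
  have pwpos: "pw t > 0" if "t \<ge> 0" for t using Npos[OF that] by (simp add: pw_def)
  obtain th where th: "th \<ge> 0" "N th < 1/2"
  proof -
    obtain t1 where t1a: "t1 \<ge> 0" "S t1 + I t1 < 1/2" using H3[rule_format, of "1/2"] by auto
    show thesis by (rule that[of t1]) (use t1a in \<open>auto simp: N_def\<close>)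
  qed
  have c0th: "continuous_on {0..th} S" "continuous_on {0..th} I" "continuous_on {0..th} R"
    by (rule continuous_on_subset[OF cS], auto, rule continuous_on_subset[OF cI], auto,
        rule continuous_on_subset[OF cR], auto)
  define ns where "ns = (1/(2*S0)) powr (1/(k-1))"
  have ns0: "0 < ns" using S0p by (simp add: ns_def)
  have ns1: "ns < 1"
    using powr_less_mono2[of "1/(k-1)" "1/(2*S0)" 1] k1 S0p by (simp add: ns_def)
  have ns2: "ns powr (k - 1) = 1/(2*S0)"
    using k1 S0p by (simp add: ns_def powr_powr)
  obtain ts0 where ts0: "ts0 > 0" "N ts0 = ns" using hit ns0 ns1 by blast
  have SIchar: "(t > 0 \<and> S t = I t) \<longleftrightarrow> t = ts0" for t
  proof
    assume t: "t > 0 \<and> S t = I t"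
    hence "2 * S0 * pw t = 1" using eqSI[of t] by simp
    moreover have "2 * S0 * pw ts0 = 1" using ts0 ns2 S0p by (simp add: pw_def)
    ultimately have "(2 * S0) * pw t = (2 * S0) * pw ts0" by simp
    hence "pw t = pw ts0" using S0p by simp
    thus "t = ts0" using pwinj[of t ts0] t ts0 by simp
  next
    assume "t = ts0"
    moreover have "2 * S0 * pw ts0 = 1" using ts0 ns2 S0p by (simp add: pw_def)
    ultimately show "t > 0 \<and> S t = I t" using eqSI[of ts0] ts0 by simp
  qed
  have claimA: "\<exists>!t. t > 0 \<and> S t = I t"
  proof (rule ex1I[of _ ts0])
    show "ts0 > 0 \<and> S ts0 = I ts0" using SIchar[of ts0] by simp
    fix y assume "y > 0 \<and> S y = I y"
    thus "y = ts0" using SIchar[of y] by simp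
  qed
  have SNdec: "S t2 + N t2 < S t1 + N t1" if "0 \<le> t1" "t1 < t2" for t1 t2
  proof -
    have "N t2 powr k < N t1 powr k"
      using powr_less_mono2[of k "N t2" "N t1"] dec[OF that] Npos[of t2] that k1 by simp
    hence "S0 * N t2 powr k < S0 * N t1 powr k" using S0p by simp
    thus ?thesis using Sinv[of t1] Sinv[of t2] dec[OF that] that by simp
  qed
  have claimB: "\<exists>!t. t > 0 \<and> S t = R t"
  proof -
    let ?f = "\<lambda>t. S t - R t"
    have cf: "continuous_on {0..th} ?f" by (intro continuous_intros c0th)
    have "?f th < 0" using IN[OF th(1)] Ipos[OF th(1)] RN[OF th(1)] th by simp
    moreover have "?f 0 > 0" using a7 a9 S0p by simp
    ultimately have "?f th \<le> 0" "0 \<le> ?f 0" by auto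
    from IVT2'[of ?f th 0 0, OF this th(1) cf]
    obtain x where x: "0 \<le> x" "?f x = 0" by blast
    have "x \<noteq> 0" using x a7 a9 S0p by auto
    hence xp: "x > 0" using x by simp
    have eq: "S x = R x" using x by simp
    show ?thesis
    proof (rule ex1I[of _ x])
      show "x > 0 \<and> S x = R x" using xp eq by simp
      fix y assume y: "y > 0 \<and> S y = R y"
      have sx: "S x + N x = 1" using eq RN[of x] xp by simp
      have sy: "S y + N y = 1" using y RN[of y] by simp
      show "y = x"
      proof (cases y x rule: linorder_cases)
        case less thus ?thesis using SNdec[of y x] y sx sy by simp
      next
        case greater thus ?thesis using SNdec[of x y] xp sx sy by simp
      qed simp
    qed
  qed
  have IRchar: "I t = R t \<longleftrightarrow> 2 * N t - S0 * N t powr k - 1 = 0" if "t \<ge> 0" for t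
    using IN[OF that] RN[OF that] Sinv[OF that] by auto
  have claimC: "\<exists>!t. t > 0 \<and> I t = R t"
  proof -
    let ?f = "\<lambda>t. I t - R t"
    have cf: "continuous_on {0..th} ?f" by (intro continuous_intros c0th)
    have "?f th < 0" using IN[OF th(1)] Spos[OF th(1)] RN[OF th(1)] th by simp
    moreover have "?f 0 > 0" using a8 a9 a4 by simp
    ultimately have "?f th \<le> 0" "0 \<le> ?f 0" by auto
    from IVT2'[of ?f th 0 0, OF this th(1) cf]
    obtain x where x: "0 \<le> x" "?f x = 0" by blast
    have "x \<noteq> 0" using x a8 a9 a4 by auto
    hence xp: "x > 0" using x by simp
    have eq: "I x = R x" using x by simp
    have noroot2: False if "0 < t1" "t1 < t2" "I t1 = R t1" "I t2 = R t2" for t1 t2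
    proof (rule concave_root[of k S0 "N t2" "N t1"])
      show "k > 1" "0 < S0" "S0 < 1" using k1 S0p by auto
      show "0 < N t2" "N t2 < N t1" "N t1 < 1" using Npos[of t2] dec[of t1 t2] Nlt1[of t1] that by auto
      show "2 * N t1 - S0 * N t1 powr k - 1 = 0" using IRchar[of t1] that by simp
      show "2 * N t2 - S0 * N t2 powr k - 1 = 0" using IRchar[of t2] that by simp
    qed
    show ?thesis
    proof (rule ex1I[of _ x])
      show "x > 0 \<and> I x = R x" using xp eq by simp
      fix y assume y: "y > 0 \<and> I y = R y"
      show "y = x"
      proof (cases y x rule: linorder_cases)
        case less thus ?thesis using noroot2[of y x] y xp eq by simp
      next
        case greater thus ?thesis using noroot2[of x y] y xp eq by simp
      qed simp
    qed
  qed
  define np where "np = (1/(k*S0)) powr (1/(k-1))"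
  have np0: "0 < np" using S0p k1 by (simp add: np_def)
  have np1: "np < 1"
    using powr_less_mono2[of "1/(k-1)" "1/(k*S0)" 1] k1 S0p kS0 by (simp add: np_def)
  have np2: "np powr (k - 1) = 1/(k*S0)"
    using k1 S0p by (simp add: np_def powr_powr)
  have np3: "k * S0 * np powr (k - 1) = 1" using np2 k1 S0p by simp
  obtain tq where tq: "tq > 0" "N tq = np" using hit np0 np1 by blast
  have Iform: "I t = N t - S0 * N t powr k" if "t \<ge> 0" for t
    using IN[OF that] Sinv[OF that] by simp
  have peakmax: "I t \<le> I tq" if "t \<ge> 0" for t
  proof (cases "N t = np")
    case True thus ?thesis using Ninj[of t tq] tq that by simp
  next
    case False
    have "N t - S0 * N t powr k < np - S0 * np powr k"
      by (rule hmax[OF k1 S0p(1) np0 np3 Npos[OF that] False])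
    thus ?thesis using Iform[OF that] Iform[of tq] tq by simp
  qed
  have claimP: "\<exists>tp > 0. \<forall>t \<ge> 0. I t \<le> I tp" using tq peakmax by blast
  have peakchar: "N tp = np" if tp: "tp > 0" "\<forall>t \<ge> 0. I t \<le> I tp" for tp
  proof (rule ccontr)
    assume ne: "N tp \<noteq> np"
    have "N tp - S0 * N tp powr k < np - S0 * np powr k"
      by (rule hmax[OF k1 S0p(1) np0 np3 Npos ne]) (use tp in simp)
    hence "I tp < I tq" using Iform[of tp] Iform[of tq] tq tp by simp
    moreover have "I tq \<le> I tp" using tp tq by simp
    ultimately show False by simp
  qed
  have pwtp: "pw tp = 1/(k*S0)" if "tp > 0" "\<forall>t \<ge> 0. I t \<le> I tp" for tp
    using peakchar[OF that] np2 by (simp add: pw_def)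
  have pwts: "pw ts = 1/(2*S0)" if "ts > 0" "S ts = I ts" for ts
  proof -
    have "2 * S0 * pw ts = 1" using eqSI[of ts] that by simp
    thus ?thesis using S0p by (simp add: field_simps)
  qed
  have claimI: "(\<beta> > 2 * \<alpha> \<longrightarrow> ts < tp) \<and> (\<beta> = 2 * \<alpha> \<longrightarrow> ts = tp) \<and> (\<beta> < 2 * \<alpha> \<longrightarrow> ts > tp)"
    if tp: "tp > 0" "\<forall>t \<ge> 0. I t \<le> I tp" and ts: "ts > 0" "S ts = I ts" for tp ts
  proof (intro conjI impI)
    have p1: "pw tp = 1/(k*S0)" by (rule pwtp[OF tp])
    have p2: "pw ts = 1/(2*S0)" by (rule pwts[OF ts])
    assume "\<beta> > 2 * \<alpha>"
    hence "k > 2" using a1 by (simp add: k_def field_simps)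
    hence "2 * S0 < k * S0" using S0p by simp
    hence "pw tp < pw ts" using p1 p2 S0p by (simp add: frac_less2)
    show "ts < tp"
    proof (rule ccontr)
      assume "\<not> ts < tp"
      hence "pw ts \<le> pw tp" using pwle[of tp ts] tp by simp
      thus False using \<open>pw tp < pw ts\<close> by simp
    qed
  next
    have p1: "pw tp = 1/(k*S0)" by (rule pwtp[OF tp])
    have p2: "pw ts = 1/(2*S0)" by (rule pwts[OF ts])
    assume "\<beta> = 2 * \<alpha>"
    hence "k = 2" using a1 by (simp add: k_def)
    hence "pw tp = pw ts" using p1 p2 by simp
    thus "ts = tp" using pwinj[of ts tp] tp ts by simp
  next
    have p1: "pw tp = 1/(k*S0)" by (rule pwtp[OF tp])
    have p2: "pw ts = 1/(2*S0)" by (rule pwts[OF ts])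
    assume "\<beta> < 2 * \<alpha>"
    hence "k < 2" using a1 by (simp add: k_def field_simps)
    hence "k * S0 < 2 * S0" using S0p by simp
    have "k * S0 > 0" using k1 S0p by simp
    hence "pw ts < pw tp" using p1 p2 \<open>k * S0 < 2 * S0\<close> by (simp add: frac_less2)
    show "ts > tp"
    proof (rule ccontr)
      assume "\<not> ts > tp"
      hence "pw tp \<le> pw ts" using pwle[of ts tp] ts by simp
      thus False using \<open>pw ts < pw tp\<close> by simp
    qed
  qed
  have third: "N t = 2/3" if "t \<ge> 0" "S t = I t" "I t = R t" for t
    using IN[OF that(1)] RN[OF that(1)] that(2,3) by simp
  have claimIII: "(S tp = I tp \<and> I tp = R tp) \<longleftrightarrow> (\<beta> = 2 * \<alpha> \<and> S0 = 3 / 4)"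
    if tp: "tp > 0" "\<forall>t \<ge> 0. I t \<le> I tp" for tp
  proof
    assume h: "S tp = I tp \<and> I tp = R tp"
    have p1: "pw tp = 1/(k*S0)" by (rule pwtp[OF tp])
    have p2: "pw tp = 1/(2*S0)" by (rule pwts) (use tp h in auto)
    have "k * S0 > 0" using k1 S0p by simp
    hence "k * S0 = 2 * S0" using p1 p2 S0p by (simp add: field_simps)
    hence k2: "k = 2" using S0p by simp
    hence "\<beta> = 2 * \<alpha>" using kb by simp
    moreover have Nt: "N tp = 2/3" using third[of tp] tp h by simp
    moreover have "pw tp = N tp" using k2 Npos[of tp] tp by (simp add: pw_def)
    hence "2/3 = 1/(2*S0)" using p2 Nt by simp
    hence "S0 = 3/4" using S0p by (simp add: field_simps)
    ultimately show "\<beta> = 2 * \<alpha> \<and> S0 = 3 / 4" by simp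
  next
    assume h: "\<beta> = 2 * \<alpha> \<and> S0 = 3 / 4"
    have k2: "k = 2" using h a1 by (simp add: k_def)
    have p1: "pw tp = 1/(k*S0)" by (rule pwtp[OF tp])
    moreover have "pw tp = N tp" using k2 Npos[of tp] tp by (simp add: pw_def)
    ultimately have Nt: "N tp = 2/3" using k2 h by simp
    have "S tp = 1/3" using Sform[of tp] tp Nt k2 h \<open>pw tp = N tp\<close> by simp
    thus "S tp = I tp \<and> I tp = R tp" using IN[of tp] RN[of tp] tp Nt by simp
  qed
  have l32: "ln 3 - ln 2 > (0::real)" by simp
  have pw23: "(2/3) powr k * (3/2) powr k = (1::real)"
    using powr_mult[of "2/3" "3/2" k, symmetric] by simp
  have claimII: "(\<exists>t > 0. S t = I t \<and> I t = R t) \<longleftrightarrow>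
         (k < ln 3 / (ln 3 - ln 2) \<and> S0 = (1 / 3) * (3 / 2) powr k)"
  proof
    assume "\<exists>t > 0. S t = I t \<and> I t = R t"
    then obtain t where t: "t > 0" "S t = I t" "I t = R t" by blast
    have Nt: "N t = 2/3" using third[of t] t by simp
    have St: "S t = 1/3" using t IN[of t] Nt by simp
    hence "S0 * (2/3) powr k = 1/3" using Sinv[of t] t Nt by simp
    hence "S0 * (2/3) powr k * (3/2) powr k = 1/3 * (3/2) powr k" by simp
    hence S0eq: "S0 = (1 / 3) * (3 / 2) powr k" using pw23 by (simp add: mult.assoc)
    have "(3/2) powr k < (3::real)" using S0eq S0p by simp
    hence "ln ((3/2) powr k) < ln (3::real)"
      by (subst ln_less_cancel_iff) auto
    hence "k * ln (3/2) < ln (3::real)" by simp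
    moreover have "ln (3/2) = ln 3 - ln (2::real)" by (rule ln_divide_pos) auto
    ultimately have "k * (ln 3 - ln 2) < ln 3" by simp
    hence "k < ln 3 / (ln 3 - ln 2)" using l32 by (simp add: pos_less_divide_eq)
    thus "k < ln 3 / (ln 3 - ln 2) \<and> S0 = (1 / 3) * (3 / 2) powr k" using S0eq by simp
  next
    assume h: "k < ln 3 / (ln 3 - ln 2) \<and> S0 = (1 / 3) * (3 / 2) powr k"
    obtain t where t: "t > 0" "N t = 2/3" using hit[of "2/3"] by auto
    have "S t = (1/3) * ((2/3) powr k * (3/2) powr k)" using Sinv[of t] t h by simp
    hence St: "S t = 1/3" using pw23 by simp
    have "S t = I t" "I t = R t" using St IN[of t] RN[of t] t by simp_all
    thus "\<exists>t > 0. S t = I t \<and> I t = R t" using t by blast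
  qed
  have claimIV: "\<forall>tp. tp > 0 \<and> (\<forall>t \<ge> 0. I t \<le> I tp) \<longrightarrow>
         (\<forall>ts. ts > 0 \<and> S ts = I ts \<longrightarrow>
             (\<beta> > 2 * \<alpha> \<longrightarrow> ts < tp)
           \<and> (\<beta> = 2 * \<alpha> \<longrightarrow> ts = tp)
           \<and> (\<beta> < 2 * \<alpha> \<longrightarrow> ts > tp))
       \<and> ((S tp = I tp \<and> I tp = R tp) \<longleftrightarrow> (\<beta> = 2 * \<alpha> \<and> S0 = 3 / 4))"
  proof (rule allI, rule impI)
    fix tp assume tp: "tp > 0 \<and> (\<forall>t \<ge> 0. I t \<le> I tp)"
    show "(\<forall>ts. ts > 0 \<and> S ts = I ts \<longrightarrow>
             (\<beta> > 2 * \<alpha> \<longrightarrow> ts < tp)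
           \<and> (\<beta> = 2 * \<alpha> \<longrightarrow> ts = tp)
           \<and> (\<beta> < 2 * \<alpha> \<longrightarrow> ts > tp))
       \<and> ((S tp = I tp \<and> I tp = R tp) \<longleftrightarrow> (\<beta> = 2 * \<alpha> \<and> S0 = 3 / 4))"
    proof (rule conjI)
      show "\<forall>ts. ts > 0 \<and> S ts = I ts \<longrightarrow>
             (\<beta> > 2 * \<alpha> \<longrightarrow> ts < tp) \<and> (\<beta> = 2 * \<alpha> \<longrightarrow> ts = tp) \<and> (\<beta> < 2 * \<alpha> \<longrightarrow> ts > tp)"
      proof (rule allI, rule impI)
        fix ts assume ts: "ts > 0 \<and> S ts = I ts"
        show "(\<beta> > 2 * \<alpha> \<longrightarrow> ts < tp) \<and> (\<beta> = 2 * \<alpha> \<longrightarrow> ts = tp) \<and> (\<beta> < 2 * \<alpha> \<longrightarrow> ts > tp)"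
          using claimI[of tp ts] tp ts by simp
      qed
      show "(S tp = I tp \<and> I tp = R tp) \<longleftrightarrow> (\<beta> = 2 * \<alpha> \<and> S0 = 3 / 4)"
        using claimIII[of tp] tp by simp
    qed
  qed
  show ?thesis
    unfolding k_def[symmetric]
    by (rule conjI[OF claimA conjI[OF claimB conjI[OF claimC conjI[OF claimP conjI[OF claimIV claimII]]]]])
qed
theorem proposition2:
  fixes \<alpha> \<beta> S0 I0 :: real and S I R :: "real \<Rightarrow> real"
  assumes "\<alpha> > 0" and "\<beta> > \<alpha>"
    and "S0 > I0" and "I0 > 0" and "S0 + I0 = 1" and "S0 > \<alpha> / \<beta>"
    and "S 0 = S0" and "I 0 = I0" and "R 0 = 0"
    and dS: "\<And>t. t \<ge> 0 \<Longrightarrow>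
       (S has_real_derivative (- \<beta> * S t * I t / (S t + I t))) (at t within {0..})"
    and dI: "\<And>t. t \<ge> 0 \<Longrightarrow>
       (I has_real_derivative (\<beta> * S t * I t / (S t + I t) - \<alpha> * I t)) (at t within {0..})"
    and dR: "\<And>t. t \<ge> 0 \<Longrightarrow>
       (R has_real_derivative (\<alpha> * I t)) (at t within {0..})"
  shows "(\<exists>!t. t > 0 \<and> S t = I t)
    \<and> (\<exists>!t. t > 0 \<and> S t = R t)
    \<and> (\<exists>!t. t > 0 \<and> I t = R t)
    \<and> (\<exists>tp > 0. \<forall>t \<ge> 0. I t \<le> I tp)
    \<and> (\<forall>tp. tp > 0 \<and> (\<forall>t \<ge> 0. I t \<le> I tp) \<longrightarrow>
         (\<forall>ts. ts > 0 \<and> S ts = I ts \<longrightarrow>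
             (\<beta> > 2 * \<alpha> \<longrightarrow> ts < tp)
           \<and> (\<beta> = 2 * \<alpha> \<longrightarrow> ts = tp)
           \<and> (\<beta> < 2 * \<alpha> \<longrightarrow> ts > tp))
       \<and> ((S tp = I tp \<and> I tp = R tp) \<longleftrightarrow> (\<beta> = 2 * \<alpha> \<and> S0 = 3 / 4)))
    \<and> ((\<exists>t > 0. S t = I t \<and> I t = R t) \<longleftrightarrow>
         (\<beta> / \<alpha> < ln 3 / (ln 3 - ln 2) \<and> S0 = (1 / 3) * (3 / 2) powr (\<beta> / \<alpha>)))"
proof -
  note P = part1[OF assms]
  show ?thesis
    by (rule part2[OF assms(1-9) conjunct1[OF P] conjunct1[OF conjunct2[OF P]]
          conjunct1[OF conjunct2[OF conjunct2[OF P]]]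
          conjunct1[OF conjunct2[OF conjunct2[OF conjunct2[OF P]]]]
          conjunct1[OF conjunct2[OF conjunct2[OF conjunct2[OF conjunct2[OF P]]]]]
          conjunct2[OF conjunct2[OF conjunct2[OF conjunct2[OF conjunct2[OF P]]]]]])
qed

end
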